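(* Let $P\subset\mathbb{R}^d$ be a finite point set satisfying the standing condition, let $\varepsilon\in(0,1)$, let $X$ be the set of extreme points of $P$, let $Q^*_\varepsilon$ be an optimal solution of GRMR (a minimum-cardinality $\varepsilon$-regret set of $P$), and let $Q_\varepsilon$ be the solution returned by the algorithm H-GRMR described in the context. Then $|Q_\varepsilon|\le\frac{|X|}{d+1}\cdot|Q^*_\varepsilon|$.
   Context: For finite $Q\subset\mathbb{R}^d$ and unit $x$, $\omega(x,Q)=\max_{p\in Q}\langle p,x\rangle$. Standing condition: $\omega(x,P)>0$ for all $x\in\mathbb{S}^{d-1}$. Regret ratio $l_x(Q)=1-\omega(x,Q)/\omega(x,P)$; $l(Q)=\max_{x\in\mathbb{S}^{d-1}}l_x(Q)$; $Q\subseteq P$ is an $\varepsilon$-regret set if $l(Q)\le\varepsilon$; GRMR asks for a minimum-cardinality $\varepsilon$-regret set. Voronoi cell $R(p)=\{x\ne0:\langle p,x\rangle\ge\omega(x,P)\}$; extreme points $X=\{t_1,\dots,t_m\}$ are the points with $R(p)\ne\varnothing$. The inner-product Delaunay graph $\mathcal{G}(P)$ is the undirected graph on $X$ with an edge $\{t_i,t_j\}$ iff $R(t_i)\cap R(t_j)\ne\varnothing$; $N(t)$ denotes the neighbors of $t$. For $t_i,t_j\in X$, $\varepsilon_{ij}$ is the optimal value of the linear program: maximize $1-\langle t_i,x\rangle$ subject to $\langle t_j-t,x\rangle\ge0$ for all $t\in N(t_j)$ and $\langle t_j,x\rangle=1$ (with $\varepsilon_{ij}=+\infty$ if unbounded).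 Algorithm H-GRMR on input $(P,X,\mathcal{G}(P),\varepsilon)$: Step 1: start with a directed graph $H_\varepsilon$ on $X$ with no edges; for each $t_i$, mark $t_i$ visited, enqueue all of $N(t_i)$, and while the queue is nonempty dequeue $t_j$; if $t_j$ is not visited, mark it visited, compute $\varepsilon_{ij}$, and if $\varepsilon_{ij}\le\varepsilon$ add edge $t_i\to t_j$ and enqueue all of $N(t_j)$ (visited marks reset for each $t_i$). Step 2: let $Dom(t_i)=\{t_i\}\cup\{t_j: t_i\to t_j\in H_\varepsilon\}$; set $Q_\varepsilon=\varnothing$, $U=X$; while $U\ne\varnothing$, pick $t^*\in X\setminus Q_\varepsilon$ maximizing $|Dom(t^* )\cap U|$, add $t^*$ to $Q_\varepsilon$ and remove $Dom(t^* )$ from $U$. Return $Q_\varepsilon$. *)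

theory Defs
  imports "HOL-Analysis.Analysis" "HOL-Library.Extended_Real"
begin

definition omega :: "'a::euclidean_space \<Rightarrow> 'a set \<Rightarrow> real" where
  "omega x Q = Max ((\<lambda>p. p \<bullet> x) ` Q)"

definition regret_x :: "'a::euclidean_space set \<Rightarrow> 'a \<Rightarrow> 'a set \<Rightarrow> real" where
  "regret_x P x Q = 1 - omega x Q / omega x P"

definition regret :: "'a::euclidean_space set \<Rightarrow> 'a set \<Rightarrow> real" where
  "regret P Q = (SUP x\<in>sphere 0 1. regret_x P x Q)"

(* Q is an eps-regret set of P (Q nonempty so that omega(x,Q) is defined) *)
definition eps_regret_set :: "'a::euclidean_space set \<Rightarrow> real \<Rightarrow> 'a set \<Rightarrow> bool" where
  "eps_regret_set P eps Q \<longleftrightarrow> Q \<subseteq> P \<and> Q \<noteq> {} \<and> regret P Q \<le> eps"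

definition GRMR_optimal :: "'a::euclidean_space set \<Rightarrow> real \<Rightarrow> 'a set \<Rightarrow> bool" where
  "GRMR_optimal P eps Q \<longleftrightarrow> eps_regret_set P eps Q \<and>
     (\<forall>Q'. eps_regret_set P eps Q' \<longrightarrow> card Q \<le> card Q')"

definition voronoi :: "'a::euclidean_space set \<Rightarrow> 'a \<Rightarrow> 'a set" where
  "voronoi P p = {x. x \<noteq> 0 \<and> p \<bullet> x \<ge> omega x P}"

definition extreme_pts :: "'a::euclidean_space set \<Rightarrow> 'a set" where
  "extreme_pts P = {p\<in>P. voronoi P p \<noteq> {}}"

definition nbrs :: "'a::euclidean_space set \<Rightarrow> 'a \<Rightarrow> 'a set" where
  "nbrs P t = {s\<in>extreme_pts P. s \<noteq> t \<and> voronoi P t \<inter> voronoi P s \<noteq> {}}"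

(* eps_ij: optimal value of the LP (+infinity if unbounded) *)
definition eps_LP :: "'a::euclidean_space set \<Rightarrow> 'a \<Rightarrow> 'a \<Rightarrow> ereal" where
  "eps_LP P ti tj = (SUP x\<in>{x. (\<forall>t\<in>nbrs P tj. (tj - t) \<bullet> x \<ge> 0) \<and> tj \<bullet> x = 1}.
                        ereal (1 - ti \<bullet> x))"

(* Step 1 of H-GRMR: BFS from source ti; state = (visited, queue, out-edges of ti) *)
inductive bfs_step :: "'a::euclidean_space set \<Rightarrow> real \<Rightarrow> 'a \<Rightarrow>
    'a set \<times> 'a list \<times> 'a set \<Rightarrow> 'a set \<times> 'a list \<times> 'a set \<Rightarrow> bool"
  for P eps ti where
  skip: "tj \<in> vis \<Longrightarrow> bfs_step P eps ti (vis, tj # q, E) (vis, q, E)"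
| good: "tj \<notin> vis \<Longrightarrow> eps_LP P ti tj \<le> ereal eps \<Longrightarrow> distinct ns \<Longrightarrow> set ns = nbrs P tj \<Longrightarrow>
         bfs_step P eps ti (vis, tj # q, E) (insert tj vis, q @ ns, insert tj E)"
| bad: "tj \<notin> vis \<Longrightarrow> \<not> eps_LP P ti tj \<le> ereal eps \<Longrightarrow>
         bfs_step P eps ti (vis, tj # q, E) (insert tj vis, q, E)"

(* E is the set of out-neighbours of ti in H_eps produced by a complete BFS run *)
definition bfs_result :: "'a::euclidean_space set \<Rightarrow> real \<Rightarrow> 'a \<Rightarrow> 'a set \<Rightarrow> bool" where
  "bfs_result P eps ti E \<longleftrightarrow> (\<exists>ns vis. distinct ns \<and> set ns = nbrs P ti \<and>
      (bfs_step P eps ti)\<^sup>*\<^sup>* ({ti}, ns, {}) (vis, [], E))"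

(* Step 2 of H-GRMR: greedy covering; state = (Q, U) *)
inductive greedy_step :: "'a set \<Rightarrow> ('a \<Rightarrow> 'a set) \<Rightarrow> 'a set \<times> 'a set \<Rightarrow> 'a set \<times> 'a set \<Rightarrow> bool"
  for X Dom where
  pick: "U \<noteq> {} \<Longrightarrow> t \<in> X - Q \<Longrightarrow> (\<forall>s\<in>X - Q. card (Dom s \<inter> U) \<le> card (Dom t \<inter> U)) \<Longrightarrow>
         greedy_step X Dom (Q, U) (insert t Q, U - Dom t)"

(* Qe is a possible output of H-GRMR on input P, X, G(P), eps (any tie-breaking / queue order) *)
definition HGRMR_output :: "'a::euclidean_space set \<Rightarrow> real \<Rightarrow> 'a set \<Rightarrow> bool" where
  "HGRMR_output P eps Qe \<longleftrightarrow> (\<exists>Out.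
      (\<forall>t\<in>extreme_pts P. bfs_result P eps t (Out t)) \<and>
      (greedy_step (extreme_pts P) (\<lambda>t. insert t (Out t)))\<^sup>*\<^sup>* ({}, extreme_pts P) (Qe, {}))"

end

theory Submission
  imports Defs
begin

lemma omega_insert:
  assumes "finite F" "F \<noteq> {}"
  shows "omega x (insert p F) = max (p \<bullet> x) (omega x F)"
  using assms by (simp add: omega_def)

lemma omega_cont:
  assumes "finite P" "P \<noteq> {}"
  shows "continuous_on S (\<lambda>x. omega x P)"
  using assms
proof (induction P rule: finite_ne_induct)
  case (singleton p)
  then show ?case by (simp add: omega_def continuous_on_inner continuous_on_id continuous_on_const)
next
  case (insert p F)
  then show ?case
    by (simp add: omega_insert continuous_on_max continuous_on_inner continuous_on_id continuous_on_const)
qed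

lemma omega_ge:
  assumes "finite Q" "q \<in> Q"
  shows "q \<bullet> x \<le> omega x Q"
  using assms by (simp add: omega_def)

lemma omega_le:
  assumes "finite Q" "Q \<noteq> {}" "\<forall>q\<in>Q. q \<bullet> x \<le> 0"
  shows "omega x Q \<le> 0"
  using assms by (simp add: omega_def)

lemma small_set_bad_dir:
  fixes Q :: "'a::euclidean_space set"
  assumes "finite Q" "Q \<noteq> {}" "card Q \<le> DIM('a)"
  shows "\<exists>x\<in>sphere 0 1. \<forall>q\<in>Q. q \<bullet> x \<le> 0"
proof -
  obtain q0 where q0: "q0 \<in> Q" using assms by auto
  have "card (Q - {q0}) < DIM('a)" using assms q0 DIM_positive[where 'a='a] card_gt_0_iff[of Q] by (simp add: card_Diff_singleton)
  moreover have "dim (Q - {q0}) \<le> card (Q - {q0})"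
    using assms by (intro dim_le_card) (auto intro: span_base)
  ultimately have "dim (Q - {q0}) < DIM('a)" by simp
  then obtain x where x: "x \<noteq> 0" "\<And>y. y \<in> span (Q - {q0}) \<Longrightarrow> orthogonal x y"
    using orthogonal_to_subspace_exists by blast
  define z where "z = (if x \<bullet> q0 > 0 then - x else x)"
  have z0: "z \<noteq> 0" using x by (simp add: z_def)
  have zq: "\<forall>q\<in>Q. q \<bullet> z \<le> 0"
  proof
    fix q assume "q \<in> Q"
    show "q \<bullet> z \<le> 0"
    proof (cases "q = q0")
      case True then show ?thesis by (auto simp: z_def inner_commute)
    next
      case False
      then have "q \<in> span (Q - {q0})" using \<open>q \<in> Q\<close> by (auto intro: span_base)
      then have "x \<bullet> q = 0" using x(2) by (simp add: orthogonal_def)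
      then show ?thesis by (auto simp: z_def inner_commute)
    qed
  qed
  define u where "u = z /\<^sub>R norm z"
  have "u \<in> sphere 0 1" using z0 by (simp add: u_def)
  moreover have "\<forall>q\<in>Q. q \<bullet> u \<le> 0" 
  proof
    fix q assume "q \<in> Q"
    then have "q \<bullet> z \<le> 0" using zq by blast
    moreover have "inverse (norm z) \<ge> 0" by simp
    ultimately have "inverse (norm z) * (q \<bullet> z) \<le> 0" using mult_nonneg_nonpos by blast
    then show "q \<bullet> u \<le> 0" by (simp add: u_def)
  qed
  ultimately show ?thesis by blast
qed

lemma greedy_subset:
  assumes "(greedy_step X Dom)\<^sup>*\<^sup>* s s'" "fst s \<subseteq> X"
  shows "fst s' \<subseteq> X"
  using assms
  apply (induction rule: rtranclp_induct)
   apply simp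
  apply (erule greedy_step.cases)
  apply auto
  done

theorem theorem5:
  fixes P :: "'a::euclidean_space set" and eps :: real and Qopt Qe :: "'a set"
  assumes "finite P" and "P \<noteq> {}"
    and "\<forall>x\<in>sphere 0 1. omega x P > 0"
    and "0 < eps" and "eps < 1"
    and "GRMR_optimal P eps Qopt"
    and "HGRMR_output P eps Qe"
  shows "real (card Qe) \<le> real (card (extreme_pts P)) / real (DIM('a) + 1) * real (card Qopt)"
proof -
  let ?X = "extreme_pts P"
  have finX: "finite ?X" using assms(1) by (simp add: extreme_pts_def)
  obtain Out where "(greedy_step ?X (\<lambda>t. insert t (Out t)))\<^sup>*\<^sup>* ({}, ?X) (Qe, {})"
    using assms(7) unfolding HGRMR_output_def by blast
  from greedy_subset[OF this] have "Qe \<subseteq> ?X" by simp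
  then have cQe: "card Qe \<le> card ?X" using finX card_mono by blast
  have Qo: "Qopt \<subseteq> P" "Qopt \<noteq> {}" "regret P Qopt \<le> eps"
    using assms(6) by (auto simp: GRMR_optimal_def eps_regret_set_def)
  have finQ: "finite Qopt" using Qo assms(1) finite_subset by blast
  obtain c where c: "c > 0" "\<forall>x\<in>sphere 0 1. c \<le> omega x P"
  proof -
    obtain x0 where "x0 \<in> sphere (0::'a) 1" "\<forall>y\<in>sphere 0 1. omega x0 P \<le> omega y P"
      using continuous_attains_inf[of "sphere (0::'a) 1" "\<lambda>x. omega x P"]
        omega_cont[OF assms(1,2)] by fastforce
    then show ?thesis using that assms(3) by blast
  qed
  obtain q1 where q1: "q1 \<in> Qopt" using Qo by auto
  have bdd: "bdd_above ((\<lambda>x. regret_x P x Qopt) ` sphere 0 1)"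
  proof (rule bdd_aboveI2)
    fix x :: 'a assume x: "x \<in> sphere 0 1"
    have "- norm q1 \<le> q1 \<bullet> x"
      using Cauchy_Schwarz_ineq2[of q1 x] x by auto
    also have "\<dots> \<le> omega x Qopt" using omega_ge[OF finQ q1] .
    finally have h1: "- norm q1 \<le> omega x Qopt" .
    have h2: "c \<le> omega x P" using c x by blast
    have "- (norm q1 / c) \<le> omega x Qopt / omega x P"
    proof (cases "omega x Qopt \<ge> 0")
      case True
      then show ?thesis using c h2 by (smt (verit) divide_nonneg_pos norm_ge_zero)
    next
      case False
      have "norm q1 / c \<ge> norm q1 / omega x P"
        using c h2 by (simp add: frac_le)
      moreover have "- omega x Qopt / omega x P \<le> norm q1 / omega x P"
        using h1 h2 c divide_right_mono[of "- omega x Qopt" "norm q1" "omega x P"] by simp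
      moreover have "- omega x Qopt / omega x P = - (omega x Qopt / omega x P)"
        by simp
      ultimately show ?thesis by linarith
    qed
    then show "regret_x P x Qopt \<le> 1 + norm q1 / c" by (simp add: regret_x_def)
  qed
  have "DIM('a) + 1 \<le> card Qopt"
  proof (rule ccontr)
    assume "\<not> ?thesis"
    then obtain x where x: "x \<in> sphere 0 1" "\<forall>q\<in>Qopt. q \<bullet> x \<le> 0"
      using small_set_bad_dir[OF finQ Qo(2)] by fastforce
    have "omega x Qopt \<le> 0" using omega_le[OF finQ Qo(2) x(2)] .
    moreover have "omega x P > 0" using assms(3) x by blast
    ultimately have "1 \<le> regret_x P x Qopt"
      by (simp add: regret_x_def divide_nonpos_pos)
    also have "\<dots> \<le> regret P Qopt" unfolding regret_def
      using bdd x(1) by (rule cSUP_upper2[OF _ _ order_refl]) 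
    finally show False using Qo(3) assms(5) by simp
  qed
  then have "1 \<le> real (card Qopt) / real (DIM('a) + 1)"
    by (simp del: of_nat_add add: of_nat_add[symmetric])
  then have "real (card ?X) * 1 \<le> real (card ?X) * (real (card Qopt) / real (DIM('a) + 1))"
    by (intro mult_left_mono) auto
  then have "real (card ?X) \<le> real (card ?X) / real (DIM('a) + 1) * real (card Qopt)"
    by simp
  moreover have "real (card Qe) \<le> real (card ?X)" using cQe by simp
  ultimately show ?thesis by linarith
qed

end
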